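(* The function $g(x)=\frac{x}{\sqrt{1-x^2}}\log\left(\frac1x\right)-\arcsin(x)\log\left(\frac{1}{\arcsin(x)}\right)$ is increasing from $(0,1)$ onto $\left(0,\frac{\pi}{2}\log\frac{\pi}{2}\right)$. In particular, for $x\in(0,1)$, $$x^{x/\sqrt{1-x^2}}<\arcsin(x)^{\arcsin(x)}<\left(\frac{\pi}{2}\right)^{\pi/2}x^{x/\sqrt{1-x^2}}.$$ *)

theory Defs
  imports Complex_Main
begin

definition g49 :: "real \<Rightarrow> real" where
  "g49 x = x / sqrt (1 - x\<^sup>2) * ln (1 / x) - arcsin x * ln (1 / arcsin x)"

end

theory Submission
  imports Defs
begin

definition hh :: "real \<Rightarrow> real" where
  "hh t = t * ln t - tan t * ln (sin t)"

lemma xlnx_bound: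
  fixes x :: real assumes "0 < x" "x \<le> 1"
  shows "\<bar>x * ln x\<bar> \<le> 2 * sqrt x"
proof -
  have s: "0 < sqrt x" using assms by simp
  have "ln (1 / sqrt x) \<le> 1 / sqrt x - 1" using s by (intro ln_le_minus_one) simp
  moreover have "ln (1 / sqrt x) = - ln x / 2" using assms by (simp add: ln_div ln_sqrt)
  ultimately have "- ln x = 2 * ln (1 / sqrt x)" "ln (1 / sqrt x) \<le> 1 / sqrt x - 1" by simp_all
  hence "- ln x \<le> 2 * (1 / sqrt x - 1)" by simp
  also have "\<dots> \<le> 2 / sqrt x" by simp
  finally have "- ln x \<le> 2 / sqrt x" .
  hence "x * (- ln x) \<le> x * (2 / sqrt x)" using assms by (intro mult_left_mono) auto
  also have "x * (2 / sqrt x) = 2 * sqrt x" using s assms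
    by (metis mult.commute real_div_sqrt times_divide_eq_right less_imp_le)
  finally have "- (x * ln x) \<le> 2 * sqrt x" by simp
  moreover have "ln x \<le> 0" using assms by simp
  hence "x * ln x \<le> 0" using assms by (simp add: mult_nonneg_nonpos)
  ultimately show ?thesis by (simp add: abs_of_nonpos)
qed

lemma sc_facts:
  assumes "0 < t" "t < pi/2"
  shows "sin t > 0" "cos t > 0" "sin t < 1" "cos t < 1"
proof -
  show s: "sin t > 0" using assms by (simp add: sin_gt_zero2)
  show c: "cos t > 0" using assms by (simp add: cos_gt_zero)
  have e: "(sin t)^2 + (cos t)^2 = 1" by simp
  have "(cos t)^2 > 0" using c by simp
  hence "(sin t)^2 < 1" using e by linarith
  hence "\<bar>sin t\<bar> < 1" using abs_square_less_1 by blast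
  thus "sin t < 1" using s by simp
  have "(sin t)^2 > 0" using s by simp
  hence "(cos t)^2 < 1" using e by linarith
  hence "\<bar>cos t\<bar> < 1" using abs_square_less_1 by blast
  thus "cos t < 1" using c by simp
qed

lemma hh_deriv:
  assumes "0 < t" "t < pi/2"
  shows "(hh has_real_derivative (ln t - ln (sin t) / (cos t)^2)) (at t)"
proof -
  note sc = sc_facts[OF assms]
  have "(hh has_real_derivative (1 * ln t + t * (1 / t) - (inverse ((cos t)^2) * ln (sin t) + tan t * (cos t / sin t)))) (at t)"
    unfolding hh_def[abs_def]
    using assms sc by (auto intro!: derivative_eq_intros)
  moreover have "1 * ln t + t * (1 / t) - (inverse ((cos t)^2) * ln (sin t) + tan t * (cos t / sin t)) = ln t - ln (sin t) / (cos t)^2"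
    using assms sc by (simp add: tan_def field_simps)
  ultimately show ?thesis by metis
qed

lemma hh_deriv_pos:
  assumes "0 < t" "t < pi/2"
  shows "ln t - ln (sin t) / (cos t)^2 > 0"
proof -
  note sc = sc_facts[OF assms]
  have "sin t \<le> t" using assms by (simp add: sin_x_le_x)
  hence l1: "ln (sin t) \<le> ln t" using sc by simp
  have l2: "ln (sin t) < 0" using sc by simp
  have c2: "(cos t)^2 < 1" "(cos t)^2 > 0" using sc by (simp_all add: power_less_one_iff)
  have "ln (sin t) * (cos t)^2 > ln (sin t) * 1"
    by (rule mult_strict_left_mono_neg[OF c2(1) l2])
  hence "ln (sin t) / (cos t)^2 < ln (sin t)" using c2 by (simp add: divide_less_eq)
  thus ?thesis using l1 by linarith
qed

lemma hh_mono:
  assumes "0 < a" "a < b" "b < pi/2"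
  shows "hh a < hh b"
  using assms by (intro DERIV_pos_imp_increasing[OF \<open>a<b\<close>]) (meson hh_deriv hh_deriv_pos less_le_trans le_less_trans)

lemma sandwich0:
  fixes f :: "'a \<Rightarrow> real"
  assumes "eventually (\<lambda>t. \<bar>f t\<bar> \<le> B t) F" "(B \<longlongrightarrow> 0) F"
  shows "(f \<longlongrightarrow> 0) F"
proof (rule real_tendsto_sandwich[of "\<lambda>t. - B t" f F B 0])
  show "eventually (\<lambda>t. - B t \<le> f t) F" using assms(1) by (rule eventually_mono) auto
  show "eventually (\<lambda>t. f t \<le> B t) F" using assms(1) by (rule eventually_mono) auto
  show "((\<lambda>t. - B t) \<longlongrightarrow> 0) F" using tendsto_minus[OF assms(2)] by simp
qed (fact assms)

lemma L0: "(hh \<longlongrightarrow> 0) (at_right 0)"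
proof -
  have ev: "eventually (\<lambda>t. 0 < t \<and> t < 1) (at_right (0::real))"
    unfolding eventually_at_right_field by (intro exI[of _ 1]) auto
  have A1: "eventually (\<lambda>t::real. \<bar>t * ln t\<bar> \<le> 2 * sqrt t) (at_right 0)"
    using ev by (rule eventually_mono) (auto intro: xlnx_bound)
  have A2: "((\<lambda>t::real. 2 * sqrt t) \<longlongrightarrow> 0) (at_right 0)"
    using tendsto_mult_left[OF tendsto_real_sqrt[OF tendsto_ident_at[of "0::real" "{0<..}"]], of 2] by simp
  have A: "((\<lambda>t::real. t * ln t) \<longlongrightarrow> 0) (at_right 0)"
    using sandwich0[OF A1 A2] .
  have B: "((\<lambda>t::real. tan t * ln (sin t)) \<longlongrightarrow> 0) (at_right 0)"
  proof (rule sandwich0[where B="\<lambda>t. 2 * sqrt (sin t) / cos t"])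
    show "eventually (\<lambda>t. \<bar>tan t * ln (sin t)\<bar> \<le> 2 * sqrt (sin t) / cos t) (at_right 0)"
      using ev
    proof (rule eventually_mono)
      fix t :: real assume t: "0 < t \<and> t < 1"
      hence t2: "t < pi/2" using pi_ge_two by linarith
      note sc = sc_facts[OF conjunct1[OF t] t2]
      have "\<bar>tan t * ln (sin t)\<bar> = \<bar>sin t * ln (sin t)\<bar> / cos t"
        using sc by (simp add: tan_def abs_mult abs_divide)
      also have "\<dots> \<le> 2 * sqrt (sin t) / cos t"
        using sc xlnx_bound[of "sin t"] by (intro divide_right_mono) auto
      finally show "\<bar>tan t * ln (sin t)\<bar> \<le> 2 * sqrt (sin t) / cos t" .
    qed
    have "((\<lambda>t. 2 * sqrt (sin t) / cos t) \<longlongrightarrow> 2 * sqrt (sin 0) / cos 0) (at_right 0)"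
      by (intro tendsto_intros) auto
    thus "((\<lambda>t. 2 * sqrt (sin t) / cos t) \<longlongrightarrow> 0) (at_right 0)" by simp
  qed
  have "((\<lambda>t::real. t * ln t - tan t * ln (sin t)) \<longlongrightarrow> 0 - 0) (at_right 0)"
    by (rule tendsto_diff[OF A B])
  thus ?thesis unfolding hh_def[abs_def] by simp
qed

lemma L1: "(hh \<longlongrightarrow> pi/2 * ln (pi/2)) (at_left (pi/2))"
proof -
  have ev: "eventually (\<lambda>t. 0 < t \<and> t < pi/2) (at_left (pi/2))"
    unfolding eventually_at_left_field by (intro exI[of _ 0]) auto
  have A: "((\<lambda>t::real. t * ln t) \<longlongrightarrow> pi/2 * ln (pi/2)) (at_left (pi/2))"
    by (intro tendsto_intros) auto
  have B: "((\<lambda>t::real. tan t * ln (sin t)) \<longlongrightarrow> 0) (at_left (pi/2))"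
  proof (rule sandwich0[where B="\<lambda>t. cos t"])
    show "eventually (\<lambda>t. \<bar>tan t * ln (sin t)\<bar> \<le> cos t) (at_left (pi/2))"
      using ev
    proof (rule eventually_mono)
      fix t :: real assume t: "0 < t \<and> t < pi/2"
      note sc = sc_facts[OF conjunct1[OF t] conjunct2[OF t]]
      have tp: "tan t > 0" using sc by (simp add: tan_def)
      have ln0: "ln (sin t) < 0" using sc by simp
      have "ln (1 / sin t) \<le> 1 / sin t - 1" using sc by (intro ln_le_minus_one) simp
      hence l: "- ln (sin t) \<le> 1 / sin t - 1" using sc by (simp add: ln_div)
      have "\<bar>tan t * ln (sin t)\<bar> = tan t * (- ln (sin t))"
        using tp ln0 by (simp add: abs_mult)
      also have "\<dots> \<le> tan t * (1 / sin t - 1)"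
        using tp l by (intro mult_left_mono) auto
      also have "\<dots> = (1 - sin t) / cos t"
        using sc by (simp add: tan_def field_simps)
      also have "\<dots> \<le> cos t"
      proof -
        have "1 - sin t \<le> (cos t)^2"
        proof -
          have "sin t * sin t \<le> sin t * 1" using sc by (intro mult_left_mono) auto
          thus ?thesis using sin_cos_squared_add[of t] by (simp add: power2_eq_square)
        qed
        thus ?thesis using sc by (simp add: divide_le_eq power2_eq_square)
      qed
      finally show "\<bar>tan t * ln (sin t)\<bar> \<le> cos t" .
    qed
    have "((\<lambda>t. cos t) \<longlongrightarrow> cos (pi/2)) (at_left (pi/2))"
      by (intro tendsto_intros)
    thus "((\<lambda>t. cos t) \<longlongrightarrow> 0) (at_left (pi/2))" by simp
  qed
  have "((\<lambda>t::real. t * ln t - tan t * ln (sin t)) \<longlongrightarrow> pi/2 * ln (pi/2) - 0) (at_left (pi/2))"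
    by (rule tendsto_diff[OF A B])
  thus ?thesis unfolding hh_def[abs_def] by simp
qed


lemma hh_pos:
  assumes "0 < t" "t < pi/2"
  shows "0 < hh t"
proof -
  have "0 \<le> hh (t/2)"
  proof (rule tendsto_upperbound[OF L0])
    show "eventually (\<lambda>s. hh s \<le> hh (t/2)) (at_right 0)"
      unfolding eventually_at_right_field
    proof (intro exI[of _ "t/2"] conjI allI impI)
      fix s assume "0 < s" "s < t/2"
      thus "hh s \<le> hh (t/2)" using hh_mono[of s "t/2"] assms by auto
    qed (use assms in auto)
  qed simp
  also have "hh (t/2) < hh t" using assms by (intro hh_mono) auto
  finally show ?thesis .
qed

lemma hh_upper:
  assumes "0 < t" "t < pi/2"
  shows "hh t < pi/2 * ln (pi/2)"
proof -
  define m where "m = (t + pi/2) / 2"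
  have m: "t < m" "m < pi/2" using assms by (auto simp: m_def)
  have "hh t < hh m" using assms m by (intro hh_mono) auto
  also have "hh m \<le> pi/2 * ln (pi/2)"
  proof (rule tendsto_lowerbound[OF L1])
    show "eventually (\<lambda>s. hh m \<le> hh s) (at_left (pi/2))"
      unfolding eventually_at_left_field
    proof (intro exI[of _ m] conjI allI impI)
      fix s assume "m < s" "s < pi/2"
      thus "hh m \<le> hh s" using hh_mono[of m s] assms m by auto
    qed (use m in auto)
  qed simp
  finally show ?thesis .
qed

lemma hh_surj:
  assumes "0 < y" "y < pi/2 * ln (pi/2)"
  shows "\<exists>t. 0 < t \<and> t < pi/2 \<and> hh t = y"
proof -
  have "eventually (\<lambda>s. hh s < y) (at_right 0)" using order_tendstoD(2)[OF L0 assms(1)] .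
  then obtain b0 where b0: "b0 > 0" "\<And>s. s > 0 \<Longrightarrow> s < b0 \<Longrightarrow> hh s < y"
    unfolding eventually_at_right_field by blast
  have "eventually (\<lambda>s. y < hh s) (at_left (pi/2))" using order_tendstoD(1)[OF L1 assms(2)] .
  then obtain b1 where b1: "b1 < pi/2" "\<And>s. s > b1 \<Longrightarrow> s < pi/2 \<Longrightarrow> y < hh s"
    unfolding eventually_at_left_field by blast
  define a where "a = min (b0/2) (pi/4)"
  define b where "b = max ((b1 + pi/2)/2) (3*pi/8)"
  have a: "0 < a" "a < b0" "a \<le> pi/4" using b0 by (auto simp: a_def)
  have "b1 < (b1+pi/2)/2" "(b1+pi/2)/2 < pi/2" "3*pi/8 < pi/2" using b1 by auto
  hence b: "b1 < b" "b < pi/2" "3*pi/8 \<le> b" unfolding b_def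
    by (metis less_max_iff_disj, metis max_less_iff_conj, simp)
  have ha: "hh a \<le> y" using b0(2)[of a] a by auto
  have hb: "y \<le> hh b" using b1(2)[of b] b by auto
  have ab: "a \<le> b" using a(3) b(3) pi_gt_zero by linarith
  have "\<forall>x. a \<le> x \<and> x \<le> b \<longrightarrow> isCont hh x"
  proof (intro allI impI)
    fix x assume "a \<le> x \<and> x \<le> b"
    hence "0 < x" "x < pi/2" using a b by auto
    thus "isCont hh x" by (rule DERIV_isCont[OF hh_deriv])
  qed
  from IVT[OF ha hb ab this] obtain x where "a \<le> x" "x \<le> b" "hh x = y" by blast
  thus ?thesis using a b by (intro exI[of _ x]) auto
qed

lemma g_eq:
  assumes "0 < x" "x < 1"
  shows "0 < arcsin x" "arcsin x < pi/2" "g49 x = hh (arcsin x)"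
proof -
  show "0 < arcsin x" using arcsin_less_mono[of 0 x] assms by simp
  show "arcsin x < pi/2" using arcsin_lt_bounded[of x] assms by simp
  have t: "tan (arcsin x) = x / sqrt (1 - x\<^sup>2)"
    using assms by (simp add: tan_def cos_arcsin)
  have "ln (1/x) = - ln x" using assms by (simp add: ln_div)
  moreover have "ln (1 / arcsin x) = - ln (arcsin x)" using \<open>0 < arcsin x\<close> by (simp add: ln_div)
  moreover have "sin (arcsin x) = x" using assms by simp
  ultimately show "g49 x = hh (arcsin x)"
    unfolding g49_def hh_def t by simp
qed

theorem lemma4p9:
  shows "strict_mono_on {0<..<1} g49
    \<and> g49 ` {0<..<1} = {0<..<pi / 2 * ln (pi / 2)}
    \<and> (\<forall>x::real. 0 < x \<and> x < 1 \<longrightarrow>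
          x powr (x / sqrt (1 - x\<^sup>2)) < arcsin x powr arcsin x
        \<and> arcsin x powr arcsin x < (pi / 2) powr (pi / 2) * x powr (x / sqrt (1 - x\<^sup>2)))"
proof (intro conjI allI impI)
  show "strict_mono_on {0<..<1} g49"
  proof (rule strict_mono_onI)
    fix x y :: real assume xy: "x \<in> {0<..<1}" "y \<in> {0<..<1}" "x < y"
    have "arcsin x < arcsin y" using xy by (subst arcsin_less_mono) auto
    thus "g49 x < g49 y" using xy g_eq[of x] g_eq[of y] by (auto intro: hh_mono)
  qed
  show "g49 ` {0<..<1} = {0<..<pi / 2 * ln (pi / 2)}"
  proof
    show "g49 ` {0<..<1} \<subseteq> {0<..<pi / 2 * ln (pi / 2)}"
      using g_eq hh_pos hh_upper by auto
    show "{0<..<pi / 2 * ln (pi / 2)} \<subseteq> g49 ` {0<..<1}"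
    proof
      fix y assume "y \<in> {0<..<pi / 2 * ln (pi / 2)}"
      then obtain t where t: "0 < t" "t < pi/2" "hh t = y" using hh_surj by auto
      note sc = sc_facts[OF t(1,2)]
      have "arcsin (sin t) = t" using t by (intro arcsin_sin) auto
      hence "g49 (sin t) = y" using g_eq(3)[of "sin t"] sc t by simp
      thus "y \<in> g49 ` {0<..<1}" using sc by force
    qed
  qed
  fix x :: real assume x: "0 < x \<and> x < 1"
  define s where "s = arcsin x"
  define a where "a = x / sqrt (1 - x\<^sup>2)"
  have s: "0 < s" "s < pi/2" using g_eq x by (auto simp: s_def)
  have g: "g49 x = s * ln s - a * ln x"
    using g_eq(3)[of x] x unfolding hh_def s_def a_def
    by (simp add: tan_def cos_arcsin)
  have gp: "0 < g49 x" "g49 x < pi/2 * ln (pi/2)"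
    using g_eq[of x] x hh_pos hh_upper by auto
  have e1: "x powr a = exp (a * ln x)" using x by (simp add: powr_def)
  have e2: "s powr s = exp (s * ln s)" using s by (simp add: powr_def)
  have e3: "(pi/2) powr (pi/2) = exp (pi/2 * ln (pi/2))" by (simp add: powr_def)
  show "x powr (x / sqrt (1 - x\<^sup>2)) < arcsin x powr arcsin x"
    using gp g unfolding a_def[symmetric] s_def[symmetric] e1 e2 by simp
  show "arcsin x powr arcsin x < (pi / 2) powr (pi / 2) * x powr (x / sqrt (1 - x\<^sup>2))"
    using gp g unfolding a_def[symmetric] s_def[symmetric] e1 e2 e3 exp_add[symmetric] by simp
qed

end
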